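(* Let $V_1$ and $V_2$ be near vector spaces over the same commutative $F$, each of finite block type. Then $BT(V_1)=BT(V_2)$ if and only if $\bar F\cap\mathrm{Aut}(V_1)=\bar F\cap\mathrm{Aut}(V_2)$.
   Context: An F-group is a pair $(V,F)$ where $(V,+)$ is a group and $F$ is a set of endomorphisms of $V$ such that: the maps $0,1,-1$ lie in $F$; $F\setminus\{0\}$ is a subgroup of $\mathrm{Aut}(V,+)$ under composition; and if $\alpha x=\beta x$ with $\alpha,\beta\in F$, $x\in V$ then $\alpha=\beta$ or $x=0$. The quasi-kernel $Q(V)$ is the set of $u\in V$ such that for all $\alpha,\beta\in F$ there is $\gamma\in F$ with $\alpha u+\beta u=\gamma u$. $(V,F)$ is a near vector space if $Q(V)$ generates $(V,+)$; "over a commutative $F$" means $\alpha(\beta v)=\beta(\alpha v)$ for all $\alpha,\beta\in F$, $v\in V$. For $u\in Q(V)\setminus\{0\}$, $\alpha+_u\beta$ is the unique $\gamma$ with $\alpha u+\beta u=\gamma u$. Elements $u,v\in Q(V)$ are compatible if $u+\lambda v\in Q(V)$ for some $\lambda\in F\setminus\{0\}$. By André's decomposition theorem $V$ is the direct sum of maximal regular (all nonzero quasi-kernel elements pairwise compatible) near vector subspaces $B_i$, $i\in I$, each nonzero element of $Q(V)$ lying in exactly one $B_i$; these are the blocks. For commutative $F$, all nonzero $u\in Q(V)\cap B_i$ give the same operation $+_{u_i}$ and $B_i$ is a vector space over the field $(F,+_{u_i},\circ)$. The block type is $BT(V)=\{+_{u_i}: i\in I\}$, a set of binary operations on $F$ (equality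 means equality of sets of operations). $V$ has finite block type if $BT(V)$ is finite, equivalently $V$ has finitely many blocks. $\bar F$ is the set of formal finite sums $\alpha_1+_\cdot\cdots+_\cdot\alpha_n$ of elements of $F$, acting on $V$ by $(\alpha_1+_\cdot\cdots+_\cdot\alpha_n)(v)=\alpha_1(v)+\cdots+\alpha_n(v)$; $\bar F\cap\mathrm{Aut}(V)$ is the set of those formal sums acting on $V$ as automorphisms of $(V,+)$. *)

theory Defs
  imports Main
begin

text \<open>The scalar structure F is modelled abstractly: a carrier Fc of type 'f with a
  composition mult and distinguished elements z (the zero map), e (identity) and m
  (negation).  An action act realises each element of Fc as an endomorphism of the
  additive group of the type 'v.  "Over the same F" means: the same abstract
  (Fc, mult, z, e, m) for both spaces.\<close>

definition F_group ::
  "'f set \<Rightarrow> ('f \<Rightarrow> 'f \<Rightarrow> 'f) \<Rightarrow> 'f \<Rightarrow> 'f \<Rightarrow> 'f \<Rightarrow> ('f \<Rightarrow> 'v::group_add \<Rightarrow> 'v) \<Rightarrow> bool"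
where
  "F_group Fc mult z e m act \<longleftrightarrow>
     z \<in> Fc \<and> e \<in> Fc \<and> m \<in> Fc \<and>
     act z = (\<lambda>_. 0) \<and> act e = id \<and> act m = uminus \<and>
     (\<forall>\<alpha>\<in>Fc. \<forall>x y. act \<alpha> (x + y) = act \<alpha> x + act \<alpha> y) \<and>
     (\<forall>\<alpha>\<in>Fc. \<forall>\<beta>\<in>Fc. mult \<alpha> \<beta> \<in> Fc \<and> act (mult \<alpha> \<beta>) = act \<alpha> \<circ> act \<beta>) \<and>
     (\<forall>\<alpha>\<in>Fc - {z}. \<forall>\<beta>\<in>Fc - {z}. mult \<alpha> \<beta> \<in> Fc - {z}) \<and>
     (\<forall>\<alpha>\<in>Fc - {z}. bij (act \<alpha>) \<and>
        (\<exists>\<beta>\<in>Fc - {z}. act \<beta> \<circ> act \<alpha> = id \<and> act \<alpha> \<circ> act \<beta> = id)) \<and>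
     (\<forall>\<alpha>\<in>Fc. \<forall>\<beta>\<in>Fc. \<forall>x. act \<alpha> x = act \<beta> x \<longrightarrow> \<alpha> = \<beta> \<or> x = 0)"

definition quasi_kernel :: "'f set \<Rightarrow> ('f \<Rightarrow> 'v::group_add \<Rightarrow> 'v) \<Rightarrow> 'v set" where
  "quasi_kernel Fc act =
     {u. \<forall>\<alpha>\<in>Fc. \<forall>\<beta>\<in>Fc. \<exists>\<gamma>\<in>Fc. act \<alpha> u + act \<beta> u = act \<gamma> u}"

inductive_set gen_subgroup :: "'v::group_add set \<Rightarrow> 'v set" for S where
  gen_zero: "0 \<in> gen_subgroup S"
| gen_base: "s \<in> S \<Longrightarrow> s \<in> gen_subgroup S"
| gen_add: "a \<in> gen_subgroup S \<Longrightarrow> b \<in> gen_subgroup S \<Longrightarrow> a + b \<in> gen_subgroup S"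
| gen_neg: "a \<in> gen_subgroup S \<Longrightarrow> - a \<in> gen_subgroup S"

definition near_vector_space ::
  "'f set \<Rightarrow> ('f \<Rightarrow> 'f \<Rightarrow> 'f) \<Rightarrow> 'f \<Rightarrow> 'f \<Rightarrow> 'f \<Rightarrow> ('f \<Rightarrow> 'v::group_add \<Rightarrow> 'v) \<Rightarrow> bool"
where
  "near_vector_space Fc mult z e m act \<longleftrightarrow>
     F_group Fc mult z e m act \<and> gen_subgroup (quasi_kernel Fc act) = UNIV"

definition commutative_F :: "'f set \<Rightarrow> ('f \<Rightarrow> 'v \<Rightarrow> 'v) \<Rightarrow> bool" where
  "commutative_F Fc act \<longleftrightarrow>
     (\<forall>\<alpha>\<in>Fc. \<forall>\<beta>\<in>Fc. \<forall>v. act \<alpha> (act \<beta> v) = act \<beta> (act \<alpha> v))"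

definition plus_u :: "'f set \<Rightarrow> ('f \<Rightarrow> 'v::group_add \<Rightarrow> 'v) \<Rightarrow> 'v \<Rightarrow> 'f \<Rightarrow> 'f \<Rightarrow> 'f" where
  "plus_u Fc act u = (\<lambda>\<alpha> \<beta>. if \<alpha> \<in> Fc \<and> \<beta> \<in> Fc
       then (THE \<gamma>. \<gamma> \<in> Fc \<and> act \<alpha> u + act \<beta> u = act \<gamma> u) else undefined)"

text \<open>Block type: the set of operations +_u for u a nonzero quasi-kernel element
  (each such u lies in exactly one block B_i and gives that block's operation +_{u_i}).\<close>
definition block_type :: "'f set \<Rightarrow> ('f \<Rightarrow> 'v::group_add \<Rightarrow> 'v) \<Rightarrow> ('f \<Rightarrow> 'f \<Rightarrow> 'f) set" where
  "block_type Fc act = {plus_u Fc act u | u. u \<in> quasi_kernel Fc act \<and> u \<noteq> 0}"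

definition finite_block_type :: "'f set \<Rightarrow> ('f \<Rightarrow> 'v::group_add \<Rightarrow> 'v) \<Rightarrow> bool" where
  "finite_block_type Fc act \<longleftrightarrow> finite (block_type Fc act)"

text \<open>Formal sums \<alpha>1 +. ... +. \<alpha>n (n \<ge> 1) as nonempty lists, and their action.\<close>
definition fsum_act :: "('f \<Rightarrow> 'v::group_add \<Rightarrow> 'v) \<Rightarrow> 'f list \<Rightarrow> 'v \<Rightarrow> 'v" where
  "fsum_act act as = (\<lambda>v. sum_list (map (\<lambda>\<alpha>. act \<alpha> v) as))"

definition Fbar_Aut :: "'f set \<Rightarrow> ('f \<Rightarrow> 'v::group_add \<Rightarrow> 'v) \<Rightarrow> 'f list set" where
  "Fbar_Aut Fc act =
     {as. as \<noteq> [] \<and> set as \<subseteq> Fc \<and> bij (fsum_act act as) \<and>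
          (\<forall>x y. fsum_act act as (x + y) = fsum_act act as x + fsum_act act as y)}"

end

theory Submission
  imports Defs
begin

definition psum :: "'f \<Rightarrow> ('f \<Rightarrow> 'f \<Rightarrow> 'f) \<Rightarrow> 'f list \<Rightarrow> 'f" where
  "psum z p L = foldr p L z"

lemma psum_Nil[simp]: "psum z p [] = z" by (simp add: psum_def)
lemma psum_Cons[simp]: "psum z p (a # L) = p a (psum z p L)" by (simp add: psum_def)

definition lprod :: "('f \<Rightarrow> 'f \<Rightarrow> 'f) \<Rightarrow> 'f list \<Rightarrow> 'f list \<Rightarrow> 'f list" where
  "lprod mult L1 L2 = concat (map (\<lambda>a. map (mult a) L2) L1)"

lemma lprod_Nil[simp]: "lprod mult [] L = []" by (simp add: lprod_def)
lemma lprod_Cons[simp]: "lprod mult (a # M) L = map (mult a) L @ lprod mult M L"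
  by (simp add: lprod_def)

lemma fsum_Nil[simp]: "fsum_act act [] v = 0" by (simp add: fsum_act_def)
lemma fsum_Cons[simp]: "fsum_act act (a # L) v = act a v + fsum_act act L v"
  by (simp add: fsum_act_def)
lemma fsum_append[simp]: "fsum_act act (L1 @ L2) v = fsum_act act L1 v + fsum_act act L2 v"
  by (induct L1) (simp_all add: add.assoc)

definition good_op :: "'f set \<Rightarrow> ('f \<Rightarrow> 'f \<Rightarrow> 'f) \<Rightarrow> 'f \<Rightarrow> 'f \<Rightarrow> ('f \<Rightarrow> 'f \<Rightarrow> 'f) \<Rightarrow> bool" where
  "good_op Fc mult z m p \<longleftrightarrow>
    (\<forall>a b. a \<in> Fc \<longrightarrow> b \<in> Fc \<longrightarrow> p a b \<in> Fc) \<and>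
    (\<forall>a b. \<not> (a \<in> Fc \<and> b \<in> Fc) \<longrightarrow> p a b = undefined) \<and>
    (\<forall>L. set L \<subseteq> Fc \<longrightarrow> psum z p L \<in> Fc) \<and>
    (\<forall>L1 L2. set L1 \<subseteq> Fc \<longrightarrow> set L2 \<subseteq> Fc \<longrightarrow>
        psum z p (L1 @ L2) = p (psum z p L1) (psum z p L2)) \<and>
    (\<forall>c L. c \<in> Fc \<longrightarrow> set L \<subseteq> Fc \<longrightarrow> psum z p (map (mult c) L) = mult c (psum z p L)) \<and>
    (\<forall>L1 L2. set L1 \<subseteq> Fc \<longrightarrow> set L2 \<subseteq> Fc \<longrightarrow>
        psum z p (lprod mult L1 L2) = mult (psum z p L2) (psum z p L1)) \<and>
    (\<forall>a b. a \<in> Fc \<longrightarrow> b \<in> Fc \<longrightarrow> psum z p [a, b, mult m (p a b)] = z) \<and>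
    (\<forall>a b c. a \<in> Fc \<longrightarrow> b \<in> Fc \<longrightarrow> c \<in> Fc \<longrightarrow> psum z p [a, b, mult m c] = z \<longrightarrow> c = p a b) \<and>
    (\<forall>x\<in>Fc. p x z = x \<and> p z x = x)"

definition gfacts :: "'f set \<Rightarrow> ('f \<Rightarrow> 'f \<Rightarrow> 'f) \<Rightarrow> 'f \<Rightarrow> 'f \<Rightarrow> 'f \<Rightarrow> bool" where
  "gfacts Fc mult z e m \<longleftrightarrow> z \<in> Fc \<and> e \<in> Fc \<and> m \<in> Fc \<and> e \<noteq> z \<and>
    (\<forall>x\<in>Fc. \<forall>y\<in>Fc. mult x y \<in> Fc \<and> mult x y = mult y x) \<and>
    (\<forall>x\<in>Fc. mult z x = z \<and> mult e x = x) \<and>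
    (\<forall>x\<in>Fc. x \<noteq> z \<longrightarrow> (\<exists>c\<in>Fc. mult c x = e))"

context
  fixes Fc :: "'f set" and mult :: "'f \<Rightarrow> 'f \<Rightarrow> 'f" and z e m :: 'f
    and act :: "'f \<Rightarrow> 'v::group_add \<Rightarrow> 'v"
  assumes FG: "F_group Fc mult z e m act" and CF: "commutative_F Fc act"
begin

lemma zin: "z \<in> Fc" and ein: "e \<in> Fc" and min: "m \<in> Fc"
  and actz: "act z = (\<lambda>_. 0)" and acte: "act e = id" and actm: "act m = uminus"
  using FG unfolding F_group_def by auto

lemma act_add: "\<alpha> \<in> Fc \<Longrightarrow> act \<alpha> (x + y) = act \<alpha> x + act \<alpha> y"
  using FG unfolding F_group_def by auto

lemma mult_in: "\<alpha> \<in> Fc \<Longrightarrow> \<beta> \<in> Fc \<Longrightarrow> mult \<alpha> \<beta> \<in> Fc"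
  using FG unfolding F_group_def by auto

lemma act_mult: "\<alpha> \<in> Fc \<Longrightarrow> \<beta> \<in> Fc \<Longrightarrow> act (mult \<alpha> \<beta>) x = act \<alpha> (act \<beta> x)"
  using FG unfolding F_group_def by auto

lemma act_inv: "\<alpha> \<in> Fc \<Longrightarrow> \<alpha> \<noteq> z \<Longrightarrow> \<exists>\<beta>\<in>Fc. act \<beta> \<circ> act \<alpha> = id"
  using FG unfolding F_group_def by blast

lemma act_sep: "\<alpha> \<in> Fc \<Longrightarrow> \<beta> \<in> Fc \<Longrightarrow> act \<alpha> x = act \<beta> x \<Longrightarrow> x \<noteq> 0 \<Longrightarrow> \<alpha> = \<beta>"
  using FG unfolding F_group_def by blast

lemma act_comm: "\<alpha> \<in> Fc \<Longrightarrow> \<beta> \<in> Fc \<Longrightarrow> act \<alpha> (act \<beta> v) = act \<beta> (act \<alpha> v)"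
  using CF unfolding commutative_F_def by blast

lemma act_0: "\<alpha> \<in> Fc \<Longrightarrow> act \<alpha> 0 = 0"
proof -
  assume a: "\<alpha> \<in> Fc"
  have "act \<alpha> 0 + 0 = act \<alpha> 0 + act \<alpha> 0" using act_add[OF a, of 0 0] by simp
  then show ?thesis by (simp only: add_left_cancel)
qed

lemma addc: "(x::'v) + y = y + x"
proof -
  have h: "- (a + b) = - a + - b" for a b :: 'v
    using act_add[OF min, of a b] by (simp add: actm)
  have "- (-x) + - (-y) = - (- y) + - (- x)"
    using h[of "-x" "-y"] by (simp add: minus_add)
  then show ?thesis by simp
qed

lemma fsum_0: "set L \<subseteq> Fc \<Longrightarrow> fsum_act act L 0 = 0"
  by (induct L) (auto simp: act_0)

lemma fsum_add: "set L \<subseteq> Fc \<Longrightarrow> fsum_act act L (x + y) = fsum_act act L x + fsum_act act L y"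
proof (induct L)
  case Nil then show ?case by simp
next
  case (Cons a L)
  have a: "a \<in> Fc" and L: "set L \<subseteq> Fc" using Cons.prems by auto
  have sw: "(p::'v) + (q + (r + s)) = p + (r + (q + s))" for p q r s
  proof -
    have "q + (r + s) = (q + r) + s" by (simp add: add.assoc)
    also have "\<dots> = (r + q) + s" by (simp add: addc[of q r])
    finally show ?thesis by (simp add: add.assoc)
  qed
  have "fsum_act act (a # L) (x + y) = (act a x + act a y) + (fsum_act act L x + fsum_act act L y)"
    using Cons.hyps[OF L] act_add[OF a, of x y] by simp
  also have "\<dots> = act a x + (act a y + (fsum_act act L x + fsum_act act L y))"
    by (simp only: add.assoc)
  also have "\<dots> = act a x + (fsum_act act L x + (act a y + fsum_act act L y))"
    by (rule sw)
  also have "\<dots> = fsum_act act (a # L) x + fsum_act act (a # L) y"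
    by (simp only: add.assoc fsum_Cons)
  finally show ?case .
qed

lemma act_fsum: "c \<in> Fc \<Longrightarrow> set L \<subseteq> Fc \<Longrightarrow> act c (fsum_act act L v) = fsum_act act L (act c v)"
proof (induct L)
  case Nil then show ?case by (simp add: act_0)
next
  case (Cons a L)
  then show ?case using act_add[OF Cons.prems(1)] act_comm[of c a v] by simp
qed

lemma fsum_scale: "c \<in> Fc \<Longrightarrow> set L \<subseteq> Fc \<Longrightarrow> fsum_act act (map (mult c) L) v = act c (fsum_act act L v)"
  by (induct L) (auto simp: act_0 act_add act_mult)

lemma fsum_lprod: "set M \<subseteq> Fc \<Longrightarrow> set L \<subseteq> Fc \<Longrightarrow>
    fsum_act act (lprod mult M L) v = fsum_act act M (fsum_act act L v)"
  by (induct M) (auto simp: fsum_scale)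

lemma lprod_in: "set M \<subseteq> Fc \<Longrightarrow> set L \<subseteq> Fc \<Longrightarrow> set (lprod mult M L) \<subseteq> Fc"
  by (induct M) (auto simp: mult_in)

lemma gfacts_of: assumes v: "(v::'v) \<noteq> 0" shows "gfacts Fc mult z e m"
proof -
  have ez: "e \<noteq> z" using v by (metis actz acte id_apply)
  have cm: "mult x y = mult y x" if "x \<in> Fc" "y \<in> Fc" for x y
  proof (rule act_sep[OF mult_in[OF that] mult_in[OF that(2,1)] _ v])
    show "act (mult x y) v = act (mult y x) v"
      using act_mult[OF that] act_mult[OF that(2,1)] act_comm[OF that] by simp
  qed
  have zx: "mult z x = z" if "x \<in> Fc" for x
    using act_sep[OF mult_in[OF zin that] zin _ v] act_mult[OF zin that] actz by simp
  have ex: "mult e x = x" if "x \<in> Fc" for x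
    using act_sep[OF mult_in[OF ein that] that _ v] act_mult[OF ein that] acte by simp
  have inv: "\<exists>c\<in>Fc. mult c x = e" if x: "x \<in> Fc" "x \<noteq> z" for x
  proof -
    obtain \<beta> where b: "\<beta> \<in> Fc" "act \<beta> \<circ> act x = id" using act_inv[OF x] by blast
    then have "act (mult \<beta> x) v = act e v" using act_mult[OF b(1) x(1)] acte
      by (metis comp_apply)
    then show ?thesis using act_sep[OF mult_in[OF b(1) x(1)] ein _ v] b(1) by blast
  qed
  show ?thesis unfolding gfacts_def using zin ein min ez cm zx ex inv mult_in by simp
qed


lemma pu:
  assumes u: "u \<in> quasi_kernel Fc act" "u \<noteq> 0" and a: "a \<in> Fc" and b: "b \<in> Fc"
  shows "plus_u Fc act u a b \<in> Fc \<and> act (plus_u Fc act u a b) u = act a u + act b u"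
proof -
  obtain g where g: "g \<in> Fc" "act a u + act b u = act g u"
    using u(1) a b unfolding quasi_kernel_def by blast
  have "(THE \<gamma>. \<gamma> \<in> Fc \<and> act a u + act b u = act \<gamma> u) = g"
    by (rule the_equality) (use g act_sep u(2) in auto)
  then have "plus_u Fc act u a b = g" using a b by (simp add: plus_u_def)
  then show ?thesis using g by simp
qed

lemma pu_out: "\<not> (a \<in> Fc \<and> b \<in> Fc) \<Longrightarrow> plus_u Fc act u a b = undefined"
  by (auto simp: plus_u_def)

lemma ps_act:
  assumes u: "u \<in> quasi_kernel Fc act" "u \<noteq> 0"
  shows "set L \<subseteq> Fc \<Longrightarrow> psum z (plus_u Fc act u) L \<in> Fc \<and>
      act (psum z (plus_u Fc act u) L) u = fsum_act act L u"
proof (induct L)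
  case Nil then show ?case by (simp add: zin actz)
next
  case (Cons a L)
  then show ?case using pu[OF u, of a "psum z (plus_u Fc act u) L"] by simp
qed

lemma good_of:
  assumes u: "u \<in> quasi_kernel Fc act" "u \<noteq> 0"
  shows "good_op Fc mult z m (plus_u Fc act u)"
proof -
  let ?p = "plus_u Fc act u"
  have inj: "x = y" if "x \<in> Fc" "y \<in> Fc" "act x u = act y u" for x y
    using act_sep[OF that u(2)] .
  note PU = pu[OF u] and PS = ps_act[OF u]
  have g1: "\<forall>a b. a \<in> Fc \<longrightarrow> b \<in> Fc \<longrightarrow> ?p a b \<in> Fc" using PU by blast
  have g2: "\<forall>a b. \<not> (a \<in> Fc \<and> b \<in> Fc) \<longrightarrow> ?p a b = undefined" using pu_out by blast
  have g3: "\<forall>L. set L \<subseteq> Fc \<longrightarrow> psum z ?p L \<in> Fc" using PS by blast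
  have g4: "psum z ?p (L1 @ L2) = ?p (psum z ?p L1) (psum z ?p L2)"
    if "set L1 \<subseteq> Fc" "set L2 \<subseteq> Fc" for L1 L2
  proof (rule inj)
    have i1: "set (L1 @ L2) \<subseteq> Fc" using that by simp
    show "psum z ?p (L1 @ L2) \<in> Fc" using PS[OF i1] by blast
    show "?p (psum z ?p L1) (psum z ?p L2) \<in> Fc" using PU PS that by blast
    show "act (psum z ?p (L1 @ L2)) u = act (?p (psum z ?p L1) (psum z ?p L2)) u"
      using PS[OF i1] PS[OF that(1)] PS[OF that(2)]
        PU[of "psum z ?p L1" "psum z ?p L2"] by simp
  qed
  have g5: "psum z ?p (map (mult c) L) = mult c (psum z ?p L)"
    if "c \<in> Fc" "set L \<subseteq> Fc" for c L
  proof (rule inj)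
    have i1: "set (map (mult c) L) \<subseteq> Fc" using that mult_in by auto
    show "psum z ?p (map (mult c) L) \<in> Fc" using PS[OF i1] by blast
    show "mult c (psum z ?p L) \<in> Fc" using PS[OF that(2)] mult_in that(1) by blast
    show "act (psum z ?p (map (mult c) L)) u = act (mult c (psum z ?p L)) u"
      using PS[OF i1] PS[OF that(2)] fsum_scale[OF that] act_mult[OF that(1)] by simp
  qed
  have g6: "psum z ?p (lprod mult L1 L2) = mult (psum z ?p L2) (psum z ?p L1)"
    if "set L1 \<subseteq> Fc" "set L2 \<subseteq> Fc" for L1 L2
  proof (rule inj)
    have i1: "set (lprod mult L1 L2) \<subseteq> Fc" using lprod_in[OF that] .
    have s1: "psum z ?p L1 \<in> Fc" and s2: "psum z ?p L2 \<in> Fc" using PS that by blast+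
    show "psum z ?p (lprod mult L1 L2) \<in> Fc" using PS[OF i1] by blast
    show "mult (psum z ?p L2) (psum z ?p L1) \<in> Fc" using s1 s2 mult_in by blast
    have "act (psum z ?p (lprod mult L1 L2)) u = fsum_act act L1 (fsum_act act L2 u)"
      using PS[OF i1] fsum_lprod[OF that] by simp
    also have "\<dots> = fsum_act act L1 (act (psum z ?p L2) u)" using PS[OF that(2)] by simp
    also have "\<dots> = act (psum z ?p L2) (fsum_act act L1 u)" using act_fsum[OF s2 that(1)] by simp
    also have "\<dots> = act (mult (psum z ?p L2) (psum z ?p L1)) u"
      using PS[OF that(1)] act_mult[OF s2 s1] by simp
    finally show "act (psum z ?p (lprod mult L1 L2)) u = act (mult (psum z ?p L2) (psum z ?p L1)) u" .
  qed
  have g7: "psum z ?p [a, b, mult m (?p a b)] = z" if "a \<in> Fc" "b \<in> Fc" for a b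
  proof (rule inj)
    have c: "?p a b \<in> Fc" "act (?p a b) u = act a u + act b u" using PU[OF that] by auto
    have i1: "set [a, b, mult m (?p a b)] \<subseteq> Fc" using that c mult_in min by auto
    show "psum z ?p [a, b, mult m (?p a b)] \<in> Fc" using PS[OF i1] by blast
    show "z \<in> Fc" by (rule zin)
    have "act (psum z ?p [a, b, mult m (?p a b)]) u = act a u + (act b u + - (act a u + act b u))"
      using PS[OF i1] act_mult[OF min c(1)] c(2) actm by simp
    also have "\<dots> = 0" by (simp only: minus_add add_minus_cancel right_minus)
    finally show "act (psum z ?p [a, b, mult m (?p a b)]) u = act z u" by (simp add: actz)
  qed
  have g8: "c = ?p a b" if "a \<in> Fc" "b \<in> Fc" "c \<in> Fc" "psum z ?p [a, b, mult m c] = z" for a b c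
  proof (rule inj)
    have i1: "set [a, b, mult m c] \<subseteq> Fc" using that mult_in min by auto
    show "c \<in> Fc" by fact
    show "?p a b \<in> Fc" using PU that by blast
    have "act a u + (act b u + - act c u) = 0"
      using PS[OF i1] that(4) act_mult[OF min that(3)] actm actz by (metis fsum_Cons fsum_Nil add_0_right comp_apply)
    then have "(act a u + act b u) + - act c u = 0" by (simp only: add.assoc)
    then have "act a u + act b u = act c u" by (simp only: diff_conv_add_uminus[symmetric] right_minus_eq)
    then show "act c u = act (?p a b) u" using PU[OF that(1,2)] by simp
  qed
  have g9: "\<forall>x\<in>Fc. ?p x z = x \<and> ?p z x = x"
  proof
    fix x assume x: "x \<in> Fc"
    show "?p x z = x \<and> ?p z x = x"
      using inj[OF conjunct1[OF PU[OF x zin]] x] inj[OF conjunct1[OF PU[OF zin x]] x]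
        PU[OF x zin] PU[OF zin x] actz by simp
  qed
  show ?thesis unfolding good_op_def
    using g1 g2 g3 g4 g5 g6 g7 g8 g9 by blast
qed

end

lemma gfD:
  assumes "gfacts Fc mult z e m"
  shows "z \<in> Fc" "e \<in> Fc" "m \<in> Fc" "e \<noteq> z"
    "x \<in> Fc \<Longrightarrow> y \<in> Fc \<Longrightarrow> mult x y \<in> Fc"
    "x \<in> Fc \<Longrightarrow> y \<in> Fc \<Longrightarrow> mult x y = mult y x"
    "x \<in> Fc \<Longrightarrow> mult z x = z" "x \<in> Fc \<Longrightarrow> mult x z = z"
    "x \<in> Fc \<Longrightarrow> mult e x = x" "x \<in> Fc \<Longrightarrow> mult x e = x"
    "x \<in> Fc \<Longrightarrow> x \<noteq> z \<Longrightarrow> \<exists>c\<in>Fc. mult c x = e"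
  using assms unfolding gfacts_def by metis+

lemma goodD:
  assumes "good_op Fc mult z m p"
  shows "a \<in> Fc \<Longrightarrow> b \<in> Fc \<Longrightarrow> p a b \<in> Fc"
    "\<not> (a \<in> Fc \<and> b \<in> Fc) \<Longrightarrow> p a b = undefined"
    "set L \<subseteq> Fc \<Longrightarrow> psum z p L \<in> Fc"
    "set L1 \<subseteq> Fc \<Longrightarrow> set L2 \<subseteq> Fc \<Longrightarrow> psum z p (L1 @ L2) = p (psum z p L1) (psum z p L2)"
    "c \<in> Fc \<Longrightarrow> set L \<subseteq> Fc \<Longrightarrow> psum z p (map (mult c) L) = mult c (psum z p L)"
    "set L1 \<subseteq> Fc \<Longrightarrow> set L2 \<subseteq> Fc \<Longrightarrow> psum z p (lprod mult L1 L2) = mult (psum z p L2) (psum z p L1)"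
    "a \<in> Fc \<Longrightarrow> b \<in> Fc \<Longrightarrow> psum z p [a, b, mult m (p a b)] = z"
    "a \<in> Fc \<Longrightarrow> b \<in> Fc \<Longrightarrow> c \<in> Fc \<Longrightarrow> psum z p [a, b, mult m c] = z \<Longrightarrow> c = p a b"
    "x \<in> Fc \<Longrightarrow> p x z = x" "x \<in> Fc \<Longrightarrow> p z x = x"
  using assms unfolding good_op_def by blast+

lemma lprod_in2: "(\<And>x y. x \<in> Fc \<Longrightarrow> y \<in> Fc \<Longrightarrow> mult x y \<in> Fc) \<Longrightarrow>
   set M \<subseteq> Fc \<Longrightarrow> set L \<subseteq> Fc \<Longrightarrow> set (lprod mult M L) \<subseteq> Fc"
  by (induct M) auto

lemma sep1:
  assumes gf: "gfacts Fc mult z e m" and gp: "good_op Fc mult z m p" and gq: "good_op Fc mult z m q"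
    and ne: "p \<noteq> q"
  shows "\<exists>D. set D \<subseteq> Fc \<and> psum z p D = z \<and> psum z q D = e"
proof -
  obtain a b where ab: "p a b \<noteq> q a b" using ne by blast
  have a: "a \<in> Fc" and b: "b \<in> Fc" using ab goodD(2)[OF gp] goodD(2)[OF gq] by metis+
  let ?D = "[a, b, mult m (p a b)]"
  have Din: "set ?D \<subseteq> Fc" using a b gfD[OF gf] goodD(1)[OF gp a b] by auto
  have pz: "psum z p ?D = z" using goodD(7)[OF gp a b] .
  have qnz: "psum z q ?D \<noteq> z"
    using goodD(8)[OF gq a b goodD(1)[OF gp a b]] ab by metis
  obtain c where c: "c \<in> Fc" "mult c (psum z q ?D) = e"
    using gfD(11)[OF gf goodD(3)[OF gq Din] qnz] by blast
  have "set (map (mult c) ?D) \<subseteq> Fc" using Din c gfD(5)[OF gf] by auto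
  moreover have "psum z p (map (mult c) ?D) = z"
    using goodD(5)[OF gp c(1) Din] pz gfD(8)[OF gf c(1)] by simp
  moreover have "psum z q (map (mult c) ?D) = e"
    using goodD(5)[OF gq c(1) Din] c(2) by simp
  ultimately show ?thesis by blast
qed

lemma idem:
  assumes gf: "gfacts Fc mult z e m" and gq: "good_op Fc mult z m q"
  shows "finite T \<Longrightarrow> \<forall>t\<in>T. good_op Fc mult z m t \<Longrightarrow> q \<notin> T \<Longrightarrow>
    \<exists>E. set E \<subseteq> Fc \<and> psum z q E = e \<and> (\<forall>t\<in>T. psum z t E = z)"
proof (induct T rule: finite_induct)
  case empty
  have "set [e] \<subseteq> Fc" "psum z q [e] = e" using gfD[OF gf] goodD(9)[OF gq] by auto
  then show ?case by blast
next
  case (insert t T)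
  obtain E where E: "set E \<subseteq> Fc" "psum z q E = e" "\<forall>t\<in>T. psum z t E = z"
    using insert by auto
  have gt: "good_op Fc mult z m t" using insert by auto
  have "t \<noteq> q" using insert by auto
  then obtain D where D: "set D \<subseteq> Fc" "psum z t D = z" "psum z q D = e"
    using sep1[OF gf gt gq] by blast
  have Pin: "set (lprod mult E D) \<subseteq> Fc" using lprod_in2[OF gfD(5)[OF gf] E(1) D(1)] .
  have "psum z q (lprod mult E D) = e"
    using goodD(6)[OF gq E(1) D(1)] E(2) D(3) gfD[OF gf] by simp
  moreover have "psum z t (lprod mult E D) = z"
    using goodD(6)[OF gt E(1) D(1)] D(2) gfD(7)[OF gf goodD(3)[OF gt E(1)]] by simp
  moreover have "psum z t' (lprod mult E D) = z" if t': "t' \<in> T" for t'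
  proof -
    have g': "good_op Fc mult z m t'" using insert t' by auto
    show ?thesis using goodD(6)[OF g' E(1) D(1)] E(3) t' gfD(8)[OF gf goodD(3)[OF g' D(1)]] by simp
  qed
  ultimately show ?case using Pin by blast
qed

lemma combine:
  assumes zF: "z \<in> Fc" and gW: "\<forall>w\<in>W. good_op Fc mult z m w"
  shows "finite R \<Longrightarrow> R \<subseteq> W \<Longrightarrow> (\<forall>r\<in>R. c r \<in> Fc) \<Longrightarrow>
    (\<forall>r\<in>R. \<exists>E. set E \<subseteq> Fc \<and> psum z r E = c r \<and> (\<forall>w\<in>W - {r}. psum z w E = z)) \<Longrightarrow>
    \<exists>L. L \<noteq> [] \<and> set L \<subseteq> Fc \<and> (\<forall>r\<in>R. psum z r L = c r) \<and> (\<forall>w\<in>W - R. psum z w L = z)"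
proof (induct R rule: finite_induct)
  case empty
  have "\<forall>w\<in>W. w z z = z" using gW goodD(9)[OF _ zF] by blast
  then have "[z] \<noteq> [] \<and> set [z] \<subseteq> Fc \<and> (\<forall>w\<in>W - {}. psum z w [z] = z)"
    using zF by auto
  then show ?case by blast
next
  case (insert r R)
  obtain L where L: "L \<noteq> []" "set L \<subseteq> Fc" "\<forall>r\<in>R. psum z r L = c r" "\<forall>w\<in>W - R. psum z w L = z"
    using insert by auto
  obtain E where E: "set E \<subseteq> Fc" "psum z r E = c r" "\<forall>w\<in>W - {r}. psum z w E = z"
    using insert.prems by auto
  have "r \<in> W" "c r \<in> Fc" using insert.prems by auto
  let ?L = "L @ E"
  have "?L \<noteq> []" "set ?L \<subseteq> Fc" using L E by auto
  moreover have "\<forall>r'\<in>insert r R. psum z r' ?L = c r'"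
  proof
    fix r' assume r': "r' \<in> insert r R"
    have g: "good_op Fc mult z m r'" using r' insert.prems gW by auto
    show "psum z r' ?L = c r'"
    proof (cases "r' = r")
      case True
      then show ?thesis using goodD(4)[OF g L(2) E(1)] L(4) E(2) goodD(10)[OF g] \<open>r \<in> W\<close>
        \<open>c r \<in> Fc\<close> insert.hyps(2) by simp
    next
      case False
      then have "r' \<in> R" "r' \<in> W" using r' insert.prems by auto
      then show ?thesis using goodD(4)[OF g L(2) E(1)] L(3) E(3) goodD(9)[OF g] insert.prems False
        by auto
    qed
  qed
  moreover have "\<forall>w\<in>W - insert r R. psum z w ?L = z"
  proof
    fix w assume w: "w \<in> W - insert r R"
    have g: "good_op Fc mult z m w" using w gW by auto
    show "psum z w ?L = z" using goodD(4)[OF g L(2) E(1)] L(4) E(3) goodD(9)[OF g zF] w by auto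
  qed
  ultimately show ?case by blast
qed

lemma avoid:
  assumes gf: "gfacts Fc mult z e m" and gp: "good_op Fc mult z m p"
    and fS: "finite S" and gS: "\<forall>q\<in>S. good_op Fc mult z m q" and pS: "p \<notin> S"
  shows "\<exists>L. L \<noteq> [] \<and> set L \<subseteq> Fc \<and> psum z p L = z \<and> (\<forall>q\<in>S. psum z q L = e)"
proof -
  have gW: "\<forall>w\<in>insert p S. good_op Fc mult z m w" using gp gS by auto
  have "\<forall>r\<in>S. \<exists>E. set E \<subseteq> Fc \<and> psum z r E = e \<and> (\<forall>w\<in>insert p S - {r}. psum z w E = z)"
  proof
    fix r assume r: "r \<in> S"
    show "\<exists>E. set E \<subseteq> Fc \<and> psum z r E = e \<and> (\<forall>w\<in>insert p S - {r}. psum z w E = z)"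
      using idem[OF gf, of r "insert p S - {r}"] gS r gW fS by auto
  qed
  then obtain L where "L \<noteq> []" "set L \<subseteq> Fc" "\<forall>r\<in>S. psum z r L = e"
      "\<forall>w\<in>insert p S - S. psum z w L = z"
    using combine[OF gfD(1)[OF gf] gW, of S "\<lambda>_. e"] fS gfD(2)[OF gf] by auto
  then show ?thesis using pS by auto
qed

lemma invert:
  assumes gf: "gfacts Fc mult z e m" and fS: "finite S" and gS: "\<forall>q\<in>S. good_op Fc mult z m q"
    and L: "set L \<subseteq> Fc" and nz: "\<forall>q\<in>S. psum z q L \<noteq> z"
  shows "\<exists>M. set M \<subseteq> Fc \<and> (\<forall>q\<in>S. mult (psum z q M) (psum z q L) = e)"
proof -
  define c where "c q = (SOME x. x \<in> Fc \<and> mult x (psum z q L) = e)" for q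
  have c: "c q \<in> Fc \<and> mult (c q) (psum z q L) = e" if "q \<in> S" for q
  proof -
    have "\<exists>x. x \<in> Fc \<and> mult x (psum z q L) = e"
      using gfD(11)[OF gf goodD(3)[OF _ L]] gS nz that by blast
    then show ?thesis unfolding c_def by (rule someI_ex)
  qed
  have "\<forall>r\<in>S. \<exists>E. set E \<subseteq> Fc \<and> psum z r E = c r \<and> (\<forall>w\<in>S - {r}. psum z w E = z)"
  proof
    fix r assume r: "r \<in> S"
    obtain E where E: "set E \<subseteq> Fc" "psum z r E = e" "\<forall>w\<in>S - {r}. psum z w E = z"
      using idem[OF gf, of r "S - {r}"] gS r fS by auto
    have cr: "c r \<in> Fc" using c r by blast
    have "set (map (mult (c r)) E) \<subseteq> Fc" using E(1) cr gfD(5)[OF gf] by auto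
    moreover have "psum z r (map (mult (c r)) E) = c r"
      using goodD(5)[OF bspec[OF gS r] cr E(1)] E(2) gfD(10)[OF gf cr] by simp
    moreover have "\<forall>w\<in>S - {r}. psum z w (map (mult (c r)) E) = z"
    proof
      fix w assume w: "w \<in> S - {r}"
      then have gw: "good_op Fc mult z m w" using gS by blast
      show "psum z w (map (mult (c r)) E) = z"
        using goodD(5)[OF gw cr E(1)] E(3) w gfD(8)[OF gf cr] by simp
    qed
    ultimately show "\<exists>E. set E \<subseteq> Fc \<and> psum z r E = c r \<and> (\<forall>w\<in>S - {r}. psum z w E = z)"
      by blast
  qed
  then obtain M where "set M \<subseteq> Fc" "\<forall>r\<in>S. psum z r M = c r"
    using combine[OF gfD(1)[OF gf] gS, of S c] fS c by auto
  then show ?thesis using c by auto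
qed


lemma gen_fix:
  assumes add: "\<And>x y. h (x + y) = h x + (h y :: 'v::group_add)" and fx: "\<And>u. u \<in> S \<Longrightarrow> h u = u"
  shows "v \<in> gen_subgroup S \<Longrightarrow> h v = v"
proof (induct rule: gen_subgroup.induct)
  case gen_zero
  have "h 0 + 0 = h 0 + h 0" using add[of 0 0] by simp
  then show ?case by (simp only: add_left_cancel)
next
  case (gen_base s) then show ?case by (rule fx)
next
  case (gen_add a b) then show ?case by (simp add: add)
next
  case (gen_neg a)
  have h0: "h 0 + 0 = h 0 + h 0" using add[of 0 0] by simp
  then have "h 0 = 0" by (simp only: add_left_cancel)
  then have "h a + h (- a) = 0" using add[of a "- a"] by simp
  then show ?case using gen_neg.hyps(2) by (metis add.inverse_unique)
qed

lemma gen_trivial: "v \<in> gen_subgroup S \<Longrightarrow> S \<subseteq> {0} \<Longrightarrow> v = 0"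
  by (induct rule: gen_subgroup.induct) auto

lemma Fbar_char:
  fixes act :: "'f \<Rightarrow> 'v::group_add \<Rightarrow> 'v"
  assumes NV: "near_vector_space Fc mult z e m act" and CF: "commutative_F Fc act"
    and fin: "finite (block_type Fc act)"
  shows "Fbar_Aut Fc act = {L. L \<noteq> [] \<and> set L \<subseteq> Fc \<and> (\<forall>p\<in>block_type Fc act. psum z p L \<noteq> z)}"
proof -
  have FG: "F_group Fc mult z e m act" and GQ: "gen_subgroup (quasi_kernel Fc act) = UNIV"
    using NV unfolding near_vector_space_def by auto
  let ?BT = "block_type Fc act"
  have good: "\<forall>p\<in>?BT. good_op Fc mult z m p"
    using good_of[OF FG CF] unfolding block_type_def by blast
  show ?thesis
  proof (intro set_eqI iffI)
    fix L assume "L \<in> Fbar_Aut Fc act"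
    then have L: "L \<noteq> []" "set L \<subseteq> Fc" "bij (fsum_act act L)" unfolding Fbar_Aut_def by auto
    have "psum z p L \<noteq> z" if p: "p \<in> ?BT" for p
    proof
      assume pz: "psum z p L = z"
      obtain u where u: "u \<in> quasi_kernel Fc act" "u \<noteq> 0" "p = plus_u Fc act u"
        using p unfolding block_type_def by blast
      have "fsum_act act L u = 0" using ps_act[OF FG CF u(1,2) L(2)] pz u(3) actz[OF FG CF] by simp
      also have "\<dots> = fsum_act act L 0" using fsum_0[OF FG CF L(2)] by simp
      finally have "u = 0" using L(3) unfolding bij_def inj_on_def by blast
      then show False using u(2) by simp
    qed
    then show "L \<in> {L. L \<noteq> [] \<and> set L \<subseteq> Fc \<and> (\<forall>p\<in>?BT. psum z p L \<noteq> z)}" using L by blast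
  next
    fix L assume "L \<in> {L. L \<noteq> [] \<and> set L \<subseteq> Fc \<and> (\<forall>p\<in>?BT. psum z p L \<noteq> z)}"
    then have L: "L \<noteq> []" "set L \<subseteq> Fc" "\<forall>p\<in>?BT. psum z p L \<noteq> z" by auto
    have addL: "\<forall>x y. fsum_act act L (x + y) = fsum_act act L x + fsum_act act L y"
      using fsum_add[OF FG CF L(2)] by blast
    have "bij (fsum_act act L)"
    proof (cases "\<exists>u\<in>quasi_kernel Fc act. u \<noteq> 0")
      case False
      then have all0: "v = 0" for v :: 'v using gen_trivial[of v "quasi_kernel Fc act"] GQ by auto
      show ?thesis unfolding bij_def inj_on_def surj_def using all0 by metis
    next
      case True
      then obtain u0 where "u0 \<noteq> (0::'v)" by blast
      then have gf: "gfacts Fc mult z e m" by (rule gfacts_of[OF FG CF])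
      obtain M where M: "set M \<subseteq> Fc" "\<forall>q\<in>?BT. mult (psum z q M) (psum z q L) = e"
        using invert[OF gf fin good L(2,3)] by blast
      have addM: "fsum_act act M (x + y) = fsum_act act M x + fsum_act act M y" for x y
        using fsum_add[OF FG CF M(1)] by blast
      have key: "fsum_act act (lprod mult A B) u = u"
        if AB: "set A \<subseteq> Fc" "set B \<subseteq> Fc" "\<forall>q\<in>?BT. mult (psum z q A) (psum z q B) = e"
          and u: "u \<in> quasi_kernel Fc act" for A B u
      proof (cases "u = 0")
        case True
        then show ?thesis using fsum_0[OF FG CF lprod_in[OF FG CF AB(1,2)]] by simp
      next
        case False
        let ?p = "plus_u Fc act u"
        have pB: "?p \<in> ?BT" using u False unfolding block_type_def by blast
        have gp: "good_op Fc mult z m ?p" using good pB by blast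
        have "fsum_act act (lprod mult A B) u = act (psum z ?p (lprod mult A B)) u"
          using ps_act[OF FG CF u False lprod_in[OF FG CF AB(1,2)]] by simp
        also have "\<dots> = act (mult (psum z ?p B) (psum z ?p A)) u" using goodD(6)[OF gp AB(1,2)] by simp
        also have "\<dots> = act e u"
          using gfD(6)[OF gf goodD(3)[OF gp AB(1)] goodD(3)[OF gp AB(2)]] AB(3) pB by simp
        finally show ?thesis using acte[OF FG CF] by simp
      qed
      have hML: "fsum_act act M (fsum_act act L v) = v" for v
      proof -
        have "fsum_act act (lprod mult M L) v = v"
        proof (rule gen_fix[where S = "quasi_kernel Fc act"])
          show "fsum_act act (lprod mult M L) (x + y) = fsum_act act (lprod mult M L) x + fsum_act act (lprod mult M L) y" for x y
            using fsum_lprod[OF FG CF M(1) L(2)] addL addM by simp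
          show "fsum_act act (lprod mult M L) u = u" if "u \<in> quasi_kernel Fc act" for u
            using key[OF M(1) L(2) M(2) that] .
          show "v \<in> gen_subgroup (quasi_kernel Fc act)" using GQ by simp
        qed
        then show ?thesis using fsum_lprod[OF FG CF M(1) L(2)] by simp
      qed
      have M2: "\<forall>q\<in>?BT. mult (psum z q L) (psum z q M) = e"
      proof
        fix q assume q: "q \<in> ?BT"
        then have gq: "good_op Fc mult z m q" using good by blast
        show "mult (psum z q L) (psum z q M) = e"
          using gfD(6)[OF gf goodD(3)[OF gq L(2)] goodD(3)[OF gq M(1)]] M(2) q by simp
      qed
      have hLM: "fsum_act act L (fsum_act act M v) = v" for v
      proof -
        have "fsum_act act (lprod mult L M) v = v"
        proof (rule gen_fix[where S = "quasi_kernel Fc act"])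
          show "fsum_act act (lprod mult L M) (x + y) = fsum_act act (lprod mult L M) x + fsum_act act (lprod mult L M) y" for x y
            using fsum_lprod[OF FG CF L(2) M(1)] addL addM by simp
          show "fsum_act act (lprod mult L M) u = u" if "u \<in> quasi_kernel Fc act" for u
            using key[OF L(2) M(1) M2 that] .
          show "v \<in> gen_subgroup (quasi_kernel Fc act)" using GQ by simp
        qed
        then show ?thesis using fsum_lprod[OF FG CF L(2) M(1)] by simp
      qed
      show ?thesis unfolding bij_def inj_on_def surj_def using hML hLM by metis
    qed
    then show "L \<in> Fbar_Aut Fc act" unfolding Fbar_Aut_def using L addL by blast
  qed
qed

lemma gf_of_BT:
  fixes act :: "'f \<Rightarrow> 'v::group_add \<Rightarrow> 'v"
  assumes NV: "near_vector_space Fc mult z e m act" and CF: "commutative_F Fc act"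
    and p: "p \<in> block_type Fc act"
  shows "gfacts Fc mult z e m"
proof -
  have FG: "F_group Fc mult z e m act" using NV unfolding near_vector_space_def by auto
  obtain u :: 'v where "u \<noteq> 0" using p unfolding block_type_def by blast
  then show ?thesis by (rule gfacts_of[OF FG CF])
qed

lemma good_BT:
  fixes act :: "'f \<Rightarrow> 'v::group_add \<Rightarrow> 'v"
  assumes NV: "near_vector_space Fc mult z e m act" and CF: "commutative_F Fc act"
  shows "\<forall>p\<in>block_type Fc act. good_op Fc mult z m p"
proof -
  have FG: "F_group Fc mult z e m act" using NV unfolding near_vector_space_def by auto
  show ?thesis using good_of[OF FG CF] unfolding block_type_def by blast
qed

lemma half:
  fixes act1 :: "'f \<Rightarrow> 'a::group_add \<Rightarrow> 'a" and act2 :: "'f \<Rightarrow> 'b::group_add \<Rightarrow> 'b"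
  assumes N1: "near_vector_space Fc mult z e m act1" and N2: "near_vector_space Fc mult z e m act2"
    and C1: "commutative_F Fc act1" and C2: "commutative_F Fc act2"
    and F1: "finite (block_type Fc act1)" and F2: "finite (block_type Fc act2)"
    and eq: "Fbar_Aut Fc act1 = Fbar_Aut Fc act2"
  shows "block_type Fc act1 \<subseteq> block_type Fc act2"
proof
  fix p assume p1: "p \<in> block_type Fc act1"
  show "p \<in> block_type Fc act2"
  proof (rule ccontr)
    assume p2: "p \<notin> block_type Fc act2"
    have gf: "gfacts Fc mult z e m" by (rule gf_of_BT[OF N1 C1 p1])
    have gp: "good_op Fc mult z m p" using good_BT[OF N1 C1] p1 by blast
    obtain L where L: "L \<noteq> []" "set L \<subseteq> Fc" "psum z p L = z" "\<forall>q\<in>block_type Fc act2. psum z q L = e"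
      using avoid[OF gf gp F2 good_BT[OF N2 C2] p2] by blast
    have "L \<in> Fbar_Aut Fc act2" unfolding Fbar_char[OF N2 C2 F2] using L gfD(4)[OF gf] by auto
    moreover have "L \<notin> Fbar_Aut Fc act1" unfolding Fbar_char[OF N1 C1 F1] using L p1 by auto
    ultimately show False using eq by simp
  qed
qed

theorem mainTheorem10:
  fixes Fc :: "'f set" and mult :: "'f \<Rightarrow> 'f \<Rightarrow> 'f" and z e m :: 'f
    and act1 :: "'f \<Rightarrow> 'a::group_add \<Rightarrow> 'a"
    and act2 :: "'f \<Rightarrow> 'b::group_add \<Rightarrow> 'b"
  assumes "near_vector_space Fc mult z e m act1"
    and "near_vector_space Fc mult z e m act2"
    and "commutative_F Fc act1"
    and "commutative_F Fc act2"
    and "finite_block_type Fc act1"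
    and "finite_block_type Fc act2"
  shows "block_type Fc act1 = block_type Fc act2 \<longleftrightarrow> Fbar_Aut Fc act1 = Fbar_Aut Fc act2"
proof
  have F1: "finite (block_type Fc act1)" and F2: "finite (block_type Fc act2)"
    using assms(5,6) unfolding finite_block_type_def by auto
  {
    assume "block_type Fc act1 = block_type Fc act2"
    then show "Fbar_Aut Fc act1 = Fbar_Aut Fc act2"
      unfolding Fbar_char[OF assms(1,3) F1] Fbar_char[OF assms(2,4) F2] by simp
  next
    assume eq: "Fbar_Aut Fc act1 = Fbar_Aut Fc act2"
    show "block_type Fc act1 = block_type Fc act2"
      using half[OF assms(1-4) F1 F2 eq] half[OF assms(2,1,4,3) F2 F1 eq[symmetric]] by blast
  }
qed


end
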